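(* Let $\mathcal C$ be a concept hierarchy, $r_1,r_2,\epsilon\in[0,1]$ with $r_1\le r_2(1-\epsilon)$, $m$ a positive integer, and let $\mathcal H$ be the network defined below with a fixed failed set $F$ satisfying the stated constraint. Then for every $B\subseteq C_0$ presented at time 0 and every concept $c$ with $c\notin supp_{r_1}(B)$, no neuron $v\in reps(c)$ fires at time $level(c)$.
   Context: Concept hierarchies: fix positive integers $\ell_{max},n,k$. A universal set $D$ of concepts is partitioned into disjoint sets $D_0,\dots,D_{\ell_{max}}$ with $|D_0|=n$; $level(c)=\ell$ for $c\in D_\ell$. A concept hierarchy $\mathcal C$ consists of $C\subseteq D$, with $C_\ell=C\cap D_\ell$, and for each $c\in C_\ell$ with $1\le\ell\le\ell_{max}$ a set $children(c)\subseteq C_{\ell-1}$, such that $|C_{\ell_{max}}|=k$, $|children(c)|=k$ for all such $c$, and $children(c)\cap children(c')=\emptyset$ for distinct $c,c'\in C_\ell$. For $B\subseteq D_0$ and $r\in[0,1]$: $B(0)=B\cap C_0$; for $1\le\ell\le\ell_{max}$, $B(\ell)=\{c\in C_\ell:|children(c)\cap B(\ell-1)|\ge rk\}$; $supp_r(B)=\bigcup_{\ell}B(\ell)$. Network $\mathcal H$: neurons partitioned into layers $N_0,\dots,N_{\ell_{max}}$. Each $c\in D_0$ has a set $reps(c)$ of $m$ neurons in $N_0$, each $c\in C$ with $level(c)\ge1$ a set $reps(c)$ of $m$ neurons in $N_{level(c)}$, all pairwise disjoint. For $u\in N_{\ell-1}$, $v\in N_\ell$: $w(u,v)=1$ iff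 $v\in reps(c)$ and $u\in reps(c')$ for a child $c'$ of $c$, else $0$. Threshold $\tau=r_2km(1-\epsilon)$. A fixed set $F$ of neurons is failed (failed neurons never fire), such that for every concept $c$ at least $m(1-\epsilon)$ neurons of $reps(c)$ are not in $F$. Input $B\subseteq C_0$ presented at time 0: a layer-0 neuron fires at time 0 iff it is in $\bigcup_{b\in B}reps(b)\setminus F$, and no layer-0 neuron fires at any other time. A non-failed $v\in N_\ell$, $\ell\ge1$, does not fire at time 0 and fires at time $t\ge1$ iff $\sum_{u\in N_{\ell-1}}w(u,v)x_u(t-1)\ge\tau$, where $x_u(s)\in\{0,1\}$ indicates whether $u$ fires at time $s$. *)

theory Defs
  imports Complex_Main
begin

definition concept_hierarchy ::
  "'c set \<Rightarrow> ('c \<Rightarrow> nat) \<Rightarrow> nat \<Rightarrow> nat \<Rightarrow> nat \<Rightarrow> 'c set \<Rightarrow> ('c \<Rightarrow> 'c set) \<Rightarrow> bool" where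
  "concept_hierarchy D level lmax n k C children \<longleftrightarrow>
     (\<forall>c\<in>D. level c \<le> lmax) \<and>
     card {c\<in>D. level c = 0} = n \<and>
     C \<subseteq> D \<and>
     card {c\<in>C. level c = lmax} = k \<and>
     (\<forall>c\<in>C. 1 \<le> level c \<longrightarrow>
        children c \<subseteq> {c'\<in>C. level c' = level c - 1} \<and> card (children c) = k) \<and>
     (\<forall>c\<in>C. \<forall>c'\<in>C. 1 \<le> level c \<and> level c' = level c \<and> c \<noteq> c' \<longrightarrow>
        children c \<inter> children c' = {})"

fun Blev :: "'c set \<Rightarrow> ('c \<Rightarrow> nat) \<Rightarrow> ('c \<Rightarrow> 'c set) \<Rightarrow> nat \<Rightarrow> real \<Rightarrow> 'c set \<Rightarrow> nat \<Rightarrow> 'c set" where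
  "Blev C level children k r B 0 = B \<inter> {c\<in>C. level c = 0}"
| "Blev C level children k r B (Suc l) =
     {c\<in>C. level c = Suc l \<and> real (card (children c \<inter> Blev C level children k r B l)) \<ge> r * real k}"

definition supp ::
  "'c set \<Rightarrow> ('c \<Rightarrow> nat) \<Rightarrow> ('c \<Rightarrow> 'c set) \<Rightarrow> nat \<Rightarrow> nat \<Rightarrow> real \<Rightarrow> 'c set \<Rightarrow> 'c set" where
  "supp C level children k lmax r B = (\<Union>l\<in>{0..lmax}. Blev C level children k r B l)"

definition rep_concepts :: "'c set \<Rightarrow> ('c \<Rightarrow> nat) \<Rightarrow> 'c set \<Rightarrow> 'c set" where
  "rep_concepts D level C = {c\<in>D. level c = 0} \<union> {c\<in>C. 1 \<le> level c}"

definition network ::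
  "'c set \<Rightarrow> ('c \<Rightarrow> nat) \<Rightarrow> nat \<Rightarrow> 'c set \<Rightarrow> 'n set \<Rightarrow> ('n \<Rightarrow> nat) \<Rightarrow> ('c \<Rightarrow> 'n set) \<Rightarrow> nat \<Rightarrow> bool" where
  "network D level lmax C N layer reps m \<longleftrightarrow>
     finite N \<and> (\<forall>u\<in>N. layer u \<le> lmax) \<and>
     (\<forall>c\<in>rep_concepts D level C.
        reps c \<subseteq> N \<and> (\<forall>u\<in>reps c. layer u = level c) \<and> card (reps c) = m) \<and>
     (\<forall>c\<in>rep_concepts D level C. \<forall>c'\<in>rep_concepts D level C.
        c \<noteq> c' \<longrightarrow> reps c \<inter> reps c' = {})"

definition weight :: "'c set \<Rightarrow> ('c \<Rightarrow> nat) \<Rightarrow> ('c \<Rightarrow> 'c set) \<Rightarrow> ('c \<Rightarrow> 'n set) \<Rightarrow> 'n \<Rightarrow> 'n \<Rightarrow> real" where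
  "weight C level children reps u v =
     (if \<exists>c\<in>C. 1 \<le> level c \<and> v \<in> reps c \<and> (\<exists>c'\<in>children c. u \<in> reps c') then 1 else 0)"

fun fires :: "'c set \<Rightarrow> ('c \<Rightarrow> nat) \<Rightarrow> ('c \<Rightarrow> 'c set) \<Rightarrow> ('c \<Rightarrow> 'n set) \<Rightarrow> 'n set \<Rightarrow> ('n \<Rightarrow> nat)
     \<Rightarrow> 'n set \<Rightarrow> real \<Rightarrow> 'c set \<Rightarrow> 'n \<Rightarrow> nat \<Rightarrow> bool" where
  "fires C level children reps N layer F tau B u 0 =
     (u \<in> N \<and> layer u = 0 \<and> u \<in> (\<Union>b\<in>B. reps b) - F)"
| "fires C level children reps N layer F tau B u (Suc t) =
     (u \<in> N \<and> u \<notin> F \<and> 1 \<le> layer u \<and>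
      (\<Sum>u'\<in>{u'\<in>N. layer u' = layer u - 1}.
          weight C level children reps u' u *
          (if fires C level children reps N layer F tau B u' t then 1 else 0)) \<ge> tau)"

end

theory Submission
  imports Defs
begin

lemma key:
  assumes ch: "concept_hierarchy D level lmax n k C children"
    and "0 < m" and "0 < k" and r: "r1 * real k * real m \<le> tau"
    and nw: "network D level lmax C N layer reps m"
    and Bsub: "B \<subseteq> {c'\<in>C. level c' = 0}"
  shows "\<forall>c v. c \<in> rep_concepts D level C \<longrightarrow> level c = l \<longrightarrow> c \<notin> Blev C level children k r1 B l
     \<longrightarrow> v \<in> reps c \<longrightarrow> \<not> fires C level children reps N layer F tau B v l"
proof (induction l)
  have CD: "C \<subseteq> D" using ch by (simp add: concept_hierarchy_def)
  have disj: "\<And>c c'. c \<in> rep_concepts D level C \<Longrightarrow> c' \<in> rep_concepts D level C \<Longrightarrow> c \<noteq> c' \<Longrightarrow> reps c \<inter> reps c' = {}"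
    using nw by (simp add: network_def)
  case 0
  show ?case
  proof (intro allI impI)
    fix c v assume c: "c \<in> rep_concepts D level C" "level c = 0" "c \<notin> Blev C level children k r1 B 0" "v \<in> reps c"
    show "\<not> fires C level children reps N layer F tau B v 0"
    proof
      assume "fires C level children reps N layer F tau B v 0"
      then obtain b where b: "b \<in> B" "v \<in> reps b" by auto
      have "b \<in> rep_concepts D level C" using b Bsub CD by (auto simp: rep_concepts_def)
      moreover have "b \<noteq> c" using b c Bsub by auto
      ultimately show False using disj c b by blast
    qed
  qed
next
  have CD: "C \<subseteq> D" using ch by (simp add: concept_hierarchy_def)
  have disj: "\<And>c c'. c \<in> rep_concepts D level C \<Longrightarrow> c' \<in> rep_concepts D level C \<Longrightarrow> c \<noteq> c' \<Longrightarrow> reps c \<inter> reps c' = {}"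
    using nw by (simp add: network_def)
  have finN: "finite N" using nw by (simp add: network_def)
  case (Suc l)
  show ?case
  proof (intro allI impI)
    fix c v assume c: "c \<in> rep_concepts D level C" "level c = Suc l" "c \<notin> Blev C level children k r1 B (Suc l)" "v \<in> reps c"
    have cC: "c \<in> C" using c by (auto simp: rep_concepts_def)
    have chc: "children c \<subseteq> {c'\<in>C. level c' = l}" "card (children c) = k"
    proof -
      have "\<forall>c\<in>C. 1 \<le> level c \<longrightarrow> children c \<subseteq> {c'\<in>C. level c' = level c - 1} \<and> card (children c) = k"
        using ch by (simp add: concept_hierarchy_def)
      hence "children c \<subseteq> {c'\<in>C. level c' = level c - 1} \<and> card (children c) = k" using cC c(2) by force
      thus "children c \<subseteq> {c'\<in>C. level c' = l}" "card (children c) = k" using c(2) by auto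
    qed
    have finch: "finite (children c)" using chc(2) \<open>0 < k\<close> card.infinite by fastforce
    have chrep: "\<And>c'. c' \<in> children c \<Longrightarrow> c' \<in> rep_concepts D level C"
      using chc CD by (auto simp: rep_concepts_def)
    have lt: "real (card (children c \<inter> Blev C level children k r1 B l)) < r1 * real k"
      using c cC by auto
    have layv: "layer v = Suc l" using nw c by (simp add: network_def)
    define S where "S = {u'\<in>N. layer u' = layer v - 1}"
    define G where "G = children c \<inter> Blev C level children k r1 B l"
    define T where "T = (\<Union>c'\<in>G. reps c')"
    have finG: "finite G" using finch G_def by simp
    have bound: "weight C level children reps u' v *
          (if fires C level children reps N layer F tau B u' l then 1 else 0) \<le> (if u' \<in> T then 1 else (0::real))"
      if "u' \<in> S" for u'
    proof (cases "weight C level children reps u' v = 1 \<and> fires C level children reps N layer F tau B u' l")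
      case True
      then obtain c'' c' where h: "c'' \<in> C" "1 \<le> level c''" "v \<in> reps c''" "c' \<in> children c''" "u' \<in> reps c'"
        unfolding weight_def by (auto split: if_splits)
      have "c'' \<in> rep_concepts D level C" using h by (auto simp: rep_concepts_def)
      hence "c'' = c" using disj[OF c(1)] h c(4) by blast
      with h have cc: "c' \<in> children c" by simp
      have "c' \<in> Blev C level children k r1 B l"
        using Suc.IH chrep[OF cc] chc(1) cc h(5) True by blast
      hence "u' \<in> T" using cc h(5) by (auto simp: T_def G_def)
      then show ?thesis using True by simp
    next
      case False
      then show ?thesis unfolding weight_def by auto
    qed
    have "(\<Sum>u'\<in>S. weight C level children reps u' v *
          (if fires C level children reps N layer F tau B u' l then 1 else 0))
        \<le> (\<Sum>u'\<in>S. (if u' \<in> T then 1 else (0::real)))"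
      by (rule sum_mono) (rule bound)
    also have "\<dots> = real (card (S \<inter> T))"
      using finN by (simp add: S_def sum.If_cases)
    also have "\<dots> \<le> real (card T)"
    proof -
      have "finite T" using finG nw chrep \<open>0 < m\<close> unfolding T_def G_def
        by (auto simp: network_def intro!: card_ge_0_finite) 
      thus ?thesis by (simp add: card_mono)
    qed
    also have "\<dots> \<le> real (\<Sum>c'\<in>G. card (reps c'))"
      unfolding T_def using card_UN_le[OF finG, of reps] by linarith
    also have "\<dots> = real (card G * m)"
      using nw chrep by (simp add: network_def G_def)
    also have "\<dots> < r1 * real k * real m"
      using lt \<open>0 < m\<close> by (simp add: G_def)
    also have "\<dots> \<le> tau" by (rule r)
    finally have "\<not> tau \<le> (\<Sum>u'\<in>S. weight C level children reps u' v *
          (if fires C level children reps N layer F tau B u' l then 1 else 0))" by simp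
    thus "\<not> fires C level children reps N layer F tau B v (Suc l)"
      by (simp add: S_def)
  qed
qed

theorem theorem7p4:
  fixes D C :: "'c set" and level :: "'c \<Rightarrow> nat" and children :: "'c \<Rightarrow> 'c set"
    and lmax n k m :: nat and r1 r2 \<epsilon> :: real
    and N F :: "'n set" and layer :: "'n \<Rightarrow> nat" and reps :: "'c \<Rightarrow> 'n set"
    and B :: "'c set" and c :: 'c and v :: 'n
  assumes "0 < lmax" and "0 < n" and "0 < k" and "0 < m"
    and "concept_hierarchy D level lmax n k C children"
    and "0 \<le> r1" and "r1 \<le> 1" and "0 \<le> r2" and "r2 \<le> 1" and "0 \<le> \<epsilon>" and "\<epsilon> \<le> 1"
    and "r1 \<le> r2 * (1 - \<epsilon>)"
    and "network D level lmax C N layer reps m"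
    and "\<forall>c'\<in>rep_concepts D level C. real (card (reps c' - F)) \<ge> real m * (1 - \<epsilon>)"
    and "B \<subseteq> {c'\<in>C. level c' = 0}"
    and "c \<in> rep_concepts D level C"
    and "c \<notin> supp C level children k lmax r1 B"
    and "v \<in> reps c"
  shows "\<not> fires C level children reps N layer F (r2 * real k * real m * (1 - \<epsilon>)) B v (level c)"
proof -
  have r: "r1 * real k * real m \<le> r2 * real k * real m * (1 - \<epsilon>)"
  proof -
    have "r1 * (real k * real m) \<le> r2 * (1 - \<epsilon>) * (real k * real m)"
      using assms(12) by (intro mult_right_mono) auto
    thus ?thesis by (simp add: algebra_simps)
  qed
  have "c \<in> D" using assms(5,16) by (auto simp: rep_concepts_def concept_hierarchy_def)
  hence "level c \<le> lmax" using assms(5) by (simp add: concept_hierarchy_def)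
  hence nb: "c \<notin> Blev C level children k r1 B (level c)" using assms(17) by (auto simp: supp_def)
  show ?thesis
    using key[OF assms(5,4,3) r assms(13,15), of "level c" F] assms(16,18) nb by blast
qed

end
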